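(* Let $\kappa$ be a regular cardinal. There is a $(\kappa,\kappa^+)$-Borel set (a subset of $\kappa^\kappa$) which is not $\kappa$-Borel.
   Context: For $X\subseteq\kappa$ with $|X|<\kappa$ and $\eta:X\to\kappa$, let $N_\eta=\{\zeta\in\kappa^\kappa\mid\eta\subseteq\zeta\}$; these sets and $\emptyset$ are the basic $\kappa$-open sets. For a cardinal $\lambda$, the $(\kappa,\lambda)$-Borel sets form the smallest class containing the basic $\kappa$-open sets and closed under complements, unions of at most $\lambda$ sets and intersections of at most $\lambda$ sets; $\kappa$-Borel means $(\kappa,\kappa)$-Borel. *)

theory Defs
  imports Main
begin

text \<open>A cardinal \<kappa> is represented by a cardinal order r on a type 'a with Field r = UNIV,
so that \<kappa> = UNIV :: 'a set and \<kappa>^\<kappa> = ('a \<Rightarrow> 'a).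
The parameter l is a cardinal order representing \<lambda>.\<close>

definition basic_open :: "'a rel \<Rightarrow> ('a \<Rightarrow> 'a) set set" where
  "basic_open r = {{\<zeta>. \<forall>x\<in>X. \<zeta> x = \<eta> x} | X \<eta>.
        X \<subseteq> Field r \<and> (card_of X, r) \<in> ordLess} \<union> {{}}"

inductive_set kl_borel :: "'a rel \<Rightarrow> 'c rel \<Rightarrow> ('a \<Rightarrow> 'a) set set"
  for r :: "'a rel" and l :: "'c rel" where
  basic: "A \<in> basic_open r \<Longrightarrow> A \<in> kl_borel r l"
| compl: "A \<in> kl_borel r l \<Longrightarrow> - A \<in> kl_borel r l"
| union: "(\<And>B. B \<in> F \<Longrightarrow> B \<in> kl_borel r l) \<Longrightarrow> (card_of F, l) \<in> ordLeq \<Longrightarrow> \<Union>F \<in> kl_borel r l"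
| inter: "(\<And>B. B \<in> F \<Longrightarrow> B \<in> kl_borel r l) \<Longrightarrow> (card_of F, l) \<in> ordLeq \<Longrightarrow> \<Inter>F \<in> kl_borel r l"

end

theory Submission
  imports Defs
begin

unbundle cardinal_syntax



lemma basic_openI: "X \<subseteq> Field r \<Longrightarrow> |X| <o r \<Longrightarrow> {\<zeta>. \<forall>x\<in>X. \<zeta> x = \<eta> x} \<in> basic_open r"
  unfolding basic_open_def by (intro UnI1 CollectI exI[of _ X] exI[of _ \<eta>]) simp

context
  fixes r :: "'a rel" and l :: "'c rel"
  assumes r1: "Card_order r" and r2: "Field r = UNIV" and r3: "infinite (UNIV::'a set)"
    and l1: "Card_order l" and l2: "infinite (Field l)" and l3: "|UNIV::'a set| \<le>o l"
begin

lemma kb_fin_card: "finite F \<Longrightarrow> |F| \<le>o l"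
proof -
  assume f: "finite F"
  have wl: "Well_order l" using l1 by (rule card_order_on_well_order_on)
  have "|F| <o l"
    by (rule finite_ordLess_infinite[OF card_of_Well_order wl]) (simp_all add: Field_card_of f l2)
  then show ?thesis by (rule ordLess_imp_ordLeq)
qed

lemma kb_single: "{z::'a\<Rightarrow>'a. z u = k} \<in> kl_borel r l"
proof -
  have wr: "Well_order r" using r1 by (rule card_order_on_well_order_on)
  have lt: "|{u}| <o r"
    by (rule finite_ordLess_infinite[OF card_of_Well_order wr]) (simp_all add: Field_card_of r2 r3)
  have "{z::'a\<Rightarrow>'a. z u = k} = {\<zeta>. \<forall>x\<in>{u}. \<zeta> x = (\<lambda>_. k) x}" by auto
  also have "\<dots> \<in> basic_open r" by (rule basic_openI) (use lt r2 in auto)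
  finally show ?thesis by (rule kl_borel.basic)
qed

lemma kb_UN: assumes "\<And>i. i \<in> I \<Longrightarrow> f i \<in> kl_borel r l" "|I| \<le>o l"
  shows "(\<Union>i\<in>I. f i) \<in> kl_borel r l"
proof (rule kl_borel.union)
  show "|f ` I| \<le>o l" by (rule ordLeq_transitive[OF card_of_image assms(2)])
qed (use assms(1) in blast)

lemma kb_INT: assumes "\<And>i. i \<in> I \<Longrightarrow> f i \<in> kl_borel r l" "|I| \<le>o l"
  shows "(\<Inter>i\<in>I. f i) \<in> kl_borel r l"
proof (rule kl_borel.inter)
  show "|f ` I| \<le>o l" by (rule ordLeq_transitive[OF card_of_image assms(2)])
qed (use assms(1) in blast)

lemma kb_UNIV_UN: "(\<And>i::'a. f i \<in> kl_borel r l) \<Longrightarrow> (\<Union>i. f i) \<in> kl_borel r l"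
  by (rule kb_UN[OF _ l3])

lemma kb_UNIV_INT: "(\<And>i::'a. f i \<in> kl_borel r l) \<Longrightarrow> (\<Inter>i. f i) \<in> kl_borel r l"
  by (rule kb_INT[OF _ l3])

lemma kb_Un2: assumes "A \<in> kl_borel r l" "B \<in> kl_borel r l" shows "A \<union> B \<in> kl_borel r l"
proof -
  have c: "|{A,B}| \<le>o l" by (rule kb_fin_card) simp
  have "\<Union>{A,B} \<in> kl_borel r l" by (rule kl_borel.union[OF _ c]) (use assms in blast)
  then show ?thesis by simp
qed

lemma kb_Int2: assumes "A \<in> kl_borel r l" "B \<in> kl_borel r l" shows "A \<inter> B \<in> kl_borel r l"
proof -
  have c: "|{A,B}| \<le>o l" by (rule kb_fin_card) simp
  have "\<Inter>{A,B} \<in> kl_borel r l" by (rule kl_borel.inter[OF _ c]) (use assms in blast)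
  then show ?thesis by simp
qed

lemma kb_empty: "{} \<in> kl_borel r l"
  by (rule kl_borel.basic) (simp add: basic_open_def)

lemma kb_vimage:
  assumes "A \<in> kl_borel r l"
  shows "(\<lambda>z::'a\<Rightarrow>'a. z \<circ> h) -` A \<in> kl_borel r l"
  using assms
proof (induction rule: kl_borel.induct)
  case (basic A)
  show ?case
  proof (cases "A = {}")
    case True then show ?thesis using kb_empty by simp
  next
    case False
    then obtain X \<eta> where A: "A = {\<zeta>. \<forall>x\<in>X. \<zeta> x = \<eta> x}" and X: "|X| <o r"
      using basic unfolding basic_open_def by blast
    show ?thesis
    proof (cases "\<forall>x1\<in>X. \<forall>x2\<in>X. h x1 = h x2 \<longrightarrow> \<eta> x1 = \<eta> x2")
      case True
      define \<eta>' where "\<eta>' u = \<eta> (SOME x. x \<in> X \<and> h x = u)" for u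
      have key: "\<eta>' (h x) = \<eta> x" if "x \<in> X" for x
      proof -
        have "(SOME y. y \<in> X \<and> h y = h x) \<in> X \<and> h (SOME y. y \<in> X \<and> h y = h x) = h x"
          by (rule someI[of _ x]) (use that in auto)
        then show ?thesis unfolding \<eta>'_def using True that by (metis (no_types, lifting))
      qed
      have "(\<lambda>z. z \<circ> h) -` A = {\<zeta>. \<forall>u\<in>h ` X. \<zeta> u = \<eta>' u}"
        using key by (auto simp: A)
      also have "\<dots> \<in> basic_open r"
        by (rule basic_openI) (use r2 ordLeq_ordLess_trans[OF card_of_image X] in auto)
      finally show ?thesis by (rule kl_borel.basic)
    next
      case False
      then obtain x1 x2 where "x1 \<in> X" "x2 \<in> X" "h x1 = h x2" "\<eta> x1 \<noteq> \<eta> x2" by blast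
      then have "(\<lambda>z. z \<circ> h) -` A = {}"
      proof (intro equals0I)
        fix z assume "z \<in> (\<lambda>z. z \<circ> h) -` A"
        then have "\<forall>x\<in>X. z (h x) = \<eta> x" by (simp add: A)
        then show False using \<open>x1 \<in> X\<close> \<open>x2 \<in> X\<close> \<open>h x1 = h x2\<close> \<open>\<eta> x1 \<noteq> \<eta> x2\<close> by metis
      qed
      then show ?thesis using kb_empty by metis
    qed
  qed
next
  case (compl A)
  then show ?case using kl_borel.compl by (metis vimage_Compl)
next
  case (union F)
  have "(\<lambda>z::'a\<Rightarrow>'a. z \<circ> h) -` \<Union>F = (\<Union>B\<in>F. (\<lambda>z. z \<circ> h) -` B)" by blast
  also have "\<dots> \<in> kl_borel r l"
    by (rule kb_UN) (use union.IH union.hyps(2) in blast)+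
  finally show ?case .
next
  case (inter F)
  have "(\<lambda>z::'a\<Rightarrow>'a. z \<circ> h) -` \<Inter>F = (\<Inter>B\<in>F. (\<lambda>z. z \<circ> h) -` B)" by blast
  also have "\<dots> \<in> kl_borel r l"
    by (rule kb_INT) (use inter.IH inter.hyps(2) in blast)+
  finally show ?case .
qed

end



locale cod =
  fixes J :: "'a \<times> 'a \<Rightarrow> 'a" and a0 a1 a2 :: 'a
  assumes injJ: "inj J" and d01: "a0 \<noteq> a1" and d02: "a0 \<noteq> a2" and d12: "a1 \<noteq> a2"
begin

definition "t0 = J (a0, a0)"
definition "P i x = J (a1, J (i, x))"
definition "chl i c = (\<lambda>x. c (P i x))"
definition "bas c y = (\<forall>x. c (P a0 x) = a1 \<longrightarrow> y x = c (P a1 x))"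
definition "L x = J (a1, x)"
definition "R x = J (a2, x)"
definition "hc i u = (if u \<in> range L then L (P i (inv L u)) else u)"
definition "dg u = (if u \<in> range L then inv L u else inv R u)"
definition "PP p = P (fst p) (snd p)"
definition "mkc t g u = (if u = t0 then t else g (fst (inv PP u)) (snd (inv PP u)))"

lemma inj_L: "inj L"
  by (rule injI) (auto simp: L_def dest: injD[OF injJ])

lemma inj_R: "inj R"
  by (rule injI) (auto simp: R_def dest: injD[OF injJ])

lemma LR: "L x \<noteq> R y"
  using d12 by (auto simp: L_def R_def dest: injD[OF injJ])

lemma inj_PP: "inj PP"
proof (rule injI)
  fix p q assume "PP p = PP q"
  then have "J (fst p, snd p) = J (fst q, snd q)" by (auto simp: PP_def P_def dest: injD[OF injJ])
  then show "p = q" by (auto simp: prod_eq_iff dest: injD[OF injJ])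
qed

lemma P_t0: "P i x \<noteq> t0"
  using d01 by (auto simp: P_def t0_def dest: injD[OF injJ])

lemma RnL: "R x \<notin> range L"
  using LR by (metis imageE)

lemma hc_L: "(z \<circ> hc i) \<circ> L = chl i (z \<circ> L)"
  by (rule ext) (simp add: hc_def chl_def inv_f_f[OF inj_L])

lemma hc_R: "(z \<circ> hc i) \<circ> R = z \<circ> R"
  by (rule ext) (simp add: hc_def RnL)

lemma dg_L: "(z \<circ> dg) \<circ> L = z"
  by (rule ext) (simp add: dg_def inv_f_f[OF inj_L])

lemma dg_R: "(z \<circ> dg) \<circ> R = z"
  by (rule ext) (simp add: dg_def RnL inv_f_f[OF inj_R])

lemma mkc_t0: "mkc t g t0 = t"
  by (simp add: mkc_def)

lemma chl_mkc: "chl i (mkc t g) = g i"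
proof
  fix x
  have "inv PP (P i x) = (i, x)" using inv_f_f[OF inj_PP, of "(i,x)"] by (simp add: PP_def)
  then show "chl i (mkc t g) x = g i x" using P_t0 by (simp add: chl_def mkc_def)
qed

inductive Ev :: "'b rel \<Rightarrow> ('a \<Rightarrow> 'a) \<Rightarrow> ('a \<Rightarrow> 'a) \<Rightarrow> bool \<Rightarrow> 'b \<Rightarrow> bool" for W where
  evB: "\<alpha> \<in> Field W \<Longrightarrow> c t0 \<noteq> a1 \<Longrightarrow> c t0 \<noteq> a2 \<Longrightarrow> Ev W c y (bas c y) \<alpha>"
| evC: "c t0 = a1 \<Longrightarrow> Ev W (chl a0 c) y b \<beta> \<Longrightarrow> (\<beta>, \<alpha>) \<in> W \<Longrightarrow> \<beta> \<noteq> \<alpha> \<Longrightarrow> Ev W c y (\<not> b) \<alpha>"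
| evUT: "c t0 = a2 \<Longrightarrow> Ev W (chl i c) y True \<beta> \<Longrightarrow> (\<beta>, \<alpha>) \<in> W \<Longrightarrow> \<beta> \<noteq> \<alpha> \<Longrightarrow> Ev W c y True \<alpha>"
| evUF: "c t0 = a2 \<Longrightarrow> (\<forall>i. \<exists>\<beta>. (\<beta>, \<alpha>) \<in> W \<and> \<beta> \<noteq> \<alpha> \<and> Ev W (chl i c) y False \<beta>) \<Longrightarrow> Ev W c y False \<alpha>"

lemma Ev_Field: "Ev W c y b \<alpha> \<Longrightarrow> \<alpha> \<in> Field W"
  by (induction rule: Ev.induct) (auto intro: FieldI2)

lemma Ev_fun: "Ev W c y b \<alpha> \<Longrightarrow> Ev W c y b' \<alpha>' \<Longrightarrow> b = b'"
proof (induction arbitrary: b' \<alpha>' rule: Ev.induct)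
  case (evB \<alpha> c y)
  from evB.prems show ?case
  proof cases
    case evB then show ?thesis by simp
  qed (use evB.hyps in simp_all)
next
  case (evC c y b \<beta> \<alpha>)
  from evC.prems show ?case
  proof cases
    case (evC b2 \<beta>2)
    then show ?thesis using evC.IH by simp
  qed (use evC.hyps d12 in simp_all)
next
  case (evUT c i y \<beta> \<alpha>)
  from evUT.prems show ?case
  proof cases
    case evUF
    then obtain \<beta>2 where "Ev W (chl i c) y False \<beta>2" by blast
    then show ?thesis using evUT.IH by blast
  qed (use evUT.hyps d12 in simp_all)
next
  case (evUF c \<alpha> y)
  from evUF.prems show ?case
  proof cases
    case (evUT i \<beta>2)
    show ?thesis using evUF.IH evUT by blast
  qed (use evUF.hyps d12 in simp_all)
qed

lemma Ev_iff: "Ev W c y b \<alpha> \<longleftrightarrow>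
   (\<alpha> \<in> Field W \<and> c t0 \<noteq> a1 \<and> c t0 \<noteq> a2 \<and> b = bas c y) \<or>
   (c t0 = a1 \<and> (\<exists>\<beta>. (\<beta>, \<alpha>) \<in> W \<and> \<beta> \<noteq> \<alpha> \<and> Ev W (chl a0 c) y (\<not> b) \<beta>)) \<or>
   (c t0 = a2 \<and> b \<and> (\<exists>i \<beta>. (\<beta>, \<alpha>) \<in> W \<and> \<beta> \<noteq> \<alpha> \<and> Ev W (chl i c) y True \<beta>)) \<or>
   (c t0 = a2 \<and> \<not> b \<and> (\<forall>i. \<exists>\<beta>. (\<beta>, \<alpha>) \<in> W \<and> \<beta> \<noteq> \<alpha> \<and> Ev W (chl i c) y False \<beta>))"
  (is "?L \<longleftrightarrow> ?R")
proof
  assume ?L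
  then show ?R
  proof cases
    case (evC b2 \<beta>)
    then show ?thesis by auto
  next
    case (evUT i \<beta>)
    then show ?thesis by blast
  qed auto
next
  assume ?R
  then consider
      (B) "\<alpha> \<in> Field W" "c t0 \<noteq> a1" "c t0 \<noteq> a2" "b = bas c y"
    | (C) \<beta> where "c t0 = a1" "(\<beta>, \<alpha>) \<in> W" "\<beta> \<noteq> \<alpha>" "Ev W (chl a0 c) y (\<not> b) \<beta>"
    | (UT) i \<beta> where "c t0 = a2" "b" "(\<beta>, \<alpha>) \<in> W" "\<beta> \<noteq> \<alpha>" "Ev W (chl i c) y True \<beta>"
    | (UF) "c t0 = a2" "\<not> b" "\<forall>i. \<exists>\<beta>. (\<beta>, \<alpha>) \<in> W \<and> \<beta> \<noteq> \<alpha> \<and> Ev W (chl i c) y False \<beta>"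
    by blast
  then show ?L
  proof cases
    case B then show ?thesis using Ev.evB[of \<alpha> W c y] by simp
  next
    case C then show ?thesis using Ev.evC[of c W y "\<not> b" \<beta> \<alpha>] by simp
  next
    case UT then show ?thesis using Ev.evUT[of c W i y \<beta> \<alpha>] by simp
  next
    case UF then show ?thesis using Ev.evUF[of c \<alpha> W y] by simp
  qed
qed

end



context cod
begin

definition "Sl W \<alpha> b = {z. Ev W (z \<circ> L) (z \<circ> R) b \<alpha>}"
definition "BS = {z. bas (z \<circ> L) (z \<circ> R)}"

lemma BS_eq: "BS = (\<Inter>x. (- {z. z (L (P a0 x)) = a1} \<union> (\<Union>k. {z. z (L (P a1 x)) = k} \<inter> {z. z (R x) = k})))"
  unfolding BS_def bas_def by auto

lemma Sl_eq: "Sl W \<alpha> b =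
   (if \<alpha> \<in> Field W then - {z. z (L t0) = a1} \<inter> - {z. z (L t0) = a2} \<inter> (if b then BS else - BS) else {})
 \<union> ({z. z (L t0) = a1} \<inter> (\<Union>\<beta>\<in>{\<beta>. (\<beta>, \<alpha>) \<in> W \<and> \<beta> \<noteq> \<alpha>}. (\<lambda>z. z \<circ> hc a0) -` Sl W \<beta> (\<not> b)))
 \<union> ({z. z (L t0) = a2} \<inter> (if b then (\<Union>i. \<Union>\<beta>\<in>{\<beta>. (\<beta>, \<alpha>) \<in> W \<and> \<beta> \<noteq> \<alpha>}. (\<lambda>z. z \<circ> hc i) -` Sl W \<beta> True)
        else (\<Inter>i. \<Union>\<beta>\<in>{\<beta>. (\<beta>, \<alpha>) \<in> W \<and> \<beta> \<noteq> \<alpha>}. (\<lambda>z. z \<circ> hc i) -` Sl W \<beta> False)))"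
proof (rule set_eqI)
  fix z :: "'a \<Rightarrow> 'a"
  have e: "z \<in> Sl W \<alpha> b' \<longleftrightarrow> Ev W (z \<circ> L) (z \<circ> R) b' \<alpha>" for b' by (simp add: Sl_def)
  have v: "z \<in> (\<lambda>z. z \<circ> hc i) -` Sl W \<beta> b' \<longleftrightarrow> Ev W (chl i (z \<circ> L)) (z \<circ> R) b' \<beta>" for i \<beta> b'
    by (simp only: vimage_def mem_Collect_eq Sl_def hc_L hc_R)
  have bs: "z \<in> BS \<longleftrightarrow> bas (z \<circ> L) (z \<circ> R)" by (simp add: BS_def)
  have t: "(z \<circ> L) t0 = z (L t0)" by simp
  show "z \<in> Sl W \<alpha> b \<longleftrightarrow> z \<in> (if \<alpha> \<in> Field W then - {z. z (L t0) = a1} \<inter> - {z. z (L t0) = a2} \<inter> (if b then BS else - BS) else {})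
 \<union> ({z. z (L t0) = a1} \<inter> (\<Union>\<beta>\<in>{\<beta>. (\<beta>, \<alpha>) \<in> W \<and> \<beta> \<noteq> \<alpha>}. (\<lambda>z. z \<circ> hc a0) -` Sl W \<beta> (\<not> b)))
 \<union> ({z. z (L t0) = a2} \<inter> (if b then (\<Union>i. \<Union>\<beta>\<in>{\<beta>. (\<beta>, \<alpha>) \<in> W \<and> \<beta> \<noteq> \<alpha>}. (\<lambda>z. z \<circ> hc i) -` Sl W \<beta> True)
        else (\<Inter>i. \<Union>\<beta>\<in>{\<beta>. (\<beta>, \<alpha>) \<in> W \<and> \<beta> \<noteq> \<alpha>}. (\<lambda>z. z \<circ> hc i) -` Sl W \<beta> False)))"
    apply (cases b; cases "\<alpha> \<in> Field W")
       apply (simp_all only: if_True if_False e v bs Un_iff Int_iff UN_iff INT_iff Compl_iff mem_Collect_eq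
        empty_iff Bex_def Ball_def simp_thms)
       apply (subst Ev_iff; use d12 in \<open>simp add: t\<close>; fail)+
    done
qed

context
  fixes r :: "'a rel" and W :: "'b rel"
  assumes r1: "Card_order r" and r2: "Field r = UNIV" and r3: "infinite (UNIV::'a set)"
    and W1: "Card_order W" and W2: "infinite (Field W)" and W3: "|UNIV::'a set| \<le>o W"
begin

lemmas kbs = kb_single[OF r1 r2 r3 W1 W2 W3]
lemmas kbUN = kb_UN[OF r1 r2 r3 W1 W2 W3]
lemmas kbUUN = kb_UNIV_UN[OF r1 r2 r3 W1 W2 W3]
lemmas kbUINT = kb_UNIV_INT[OF r1 r2 r3 W1 W2 W3]
lemmas kbUn = kb_Un2[OF r1 r2 r3 W1 W2 W3]
lemmas kbInt = kb_Int2[OF r1 r2 r3 W1 W2 W3]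
lemmas kbvim = kb_vimage[OF r1 r2 r3 W1 W2 W3]
lemmas kbe = kb_empty[OF r1 r2 r3 W1 W2 W3]

lemma card_sub_W: "S \<subseteq> Field W \<Longrightarrow> |S| \<le>o W"
  by (rule ordLeq_ordIso_trans[OF card_of_mono1 card_of_Field_ordIso[OF W1]])

lemma BS_borel: "BS \<in> kl_borel r W"
  unfolding BS_eq
  by (intro kbUINT kbUn kl_borel.compl kbs kbUUN kbInt)

lemma Sl_borel: "Sl W \<alpha> b \<in> kl_borel r W"
proof -
  have wf: "wf (W - Id)"
    using card_order_on_well_order_on[OF W1] unfolding well_order_on_def by blast
  have "\<forall>b. Sl W \<alpha> b \<in> kl_borel r W"
  proof (induction \<alpha> rule: wf_induct_rule[OF wf])
    case (1 \<alpha>)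
    have ih: "Sl W \<beta> b \<in> kl_borel r W" if "\<beta> \<in> {\<beta>. (\<beta>, \<alpha>) \<in> W \<and> \<beta> \<noteq> \<alpha>}" for \<beta> b
      using 1 that by blast
    have cs: "|{\<beta>. (\<beta>, \<alpha>) \<in> W \<and> \<beta> \<noteq> \<alpha>}| \<le>o W"
      by (rule card_sub_W) (auto intro: FieldI1)
    have UU: "(\<Union>\<beta>\<in>{\<beta>. (\<beta>, \<alpha>) \<in> W \<and> \<beta> \<noteq> \<alpha>}. (\<lambda>z. z \<circ> hc i) -` Sl W \<beta> b) \<in> kl_borel r W" for i b
      by (rule kbUN[OF _ cs]) (rule kbvim[OF ih])
    show ?case
    proof
      fix b
      have T1: "{z::'a\<Rightarrow>'a. z (L t0) = a1} \<in> kl_borel r W" by (rule kbs)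
      have T2: "{z::'a\<Rightarrow>'a. z (L t0) = a2} \<in> kl_borel r W" by (rule kbs)
      have BB: "(if b then BS else - BS) \<in> kl_borel r W"
        using BS_borel kl_borel.compl[OF BS_borel] by simp
      have B: "(if \<alpha> \<in> Field W then - {z. z (L t0) = a1} \<inter> - {z. z (L t0) = a2} \<inter> (if b then BS else - BS) else {}) \<in> kl_borel r W"
        using kbInt[OF kbInt[OF kl_borel.compl[OF T1] kl_borel.compl[OF T2]] BB] kbe by simp
      have C: "{z. z (L t0) = a1} \<inter> (\<Union>\<beta>\<in>{\<beta>. (\<beta>, \<alpha>) \<in> W \<and> \<beta> \<noteq> \<alpha>}. (\<lambda>z. z \<circ> hc a0) -` Sl W \<beta> (\<not> b)) \<in> kl_borel r W"
        by (rule kbInt[OF T1 UU])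
      have X: "(if b then (\<Union>i. \<Union>\<beta>\<in>{\<beta>. (\<beta>, \<alpha>) \<in> W \<and> \<beta> \<noteq> \<alpha>}. (\<lambda>z. z \<circ> hc i) -` Sl W \<beta> True)
        else (\<Inter>i. \<Union>\<beta>\<in>{\<beta>. (\<beta>, \<alpha>) \<in> W \<and> \<beta> \<noteq> \<alpha>}. (\<lambda>z. z \<circ> hc i) -` Sl W \<beta> False)) \<in> kl_borel r W"
        using kbUUN[OF UU] kbUINT[OF UU] by simp
      show "Sl W \<alpha> b \<in> kl_borel r W"
        unfolding Sl_eq[of W \<alpha> b] by (rule kbUn[OF kbUn[OF B C] kbInt[OF T2 X]])
    qed
  qed
  then show ?thesis by blast
qed

lemma diag_borel: "{y. \<exists>\<alpha>. Ev W y y False \<alpha>} \<in> kl_borel r W"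
proof -
  have "{y. \<exists>\<alpha>. Ev W y y False \<alpha>} = (\<Union>\<alpha>\<in>Field W. (\<lambda>z. z \<circ> dg) -` Sl W \<alpha> False)"
  proof (rule set_eqI)
    fix y
    have "y \<in> (\<lambda>z. z \<circ> dg) -` Sl W \<alpha> False \<longleftrightarrow> Ev W y y False \<alpha>" for \<alpha>
      by (simp only: vimage_def mem_Collect_eq Sl_def dg_L dg_R)
    then show "y \<in> {y. \<exists>\<alpha>. Ev W y y False \<alpha>} \<longleftrightarrow> y \<in> (\<Union>\<alpha>\<in>Field W. (\<lambda>z. z \<circ> dg) -` Sl W \<alpha> False)"
      using Ev_Field[of W y y False] by blast
  qed
  also have "\<dots> \<in> kl_borel r W"
    by (rule kbUN[OF kbvim[OF Sl_borel] card_sub_W]) (rule order_refl)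
  finally show ?thesis .
qed

end
end



lemma fin_le_UNIV:
  assumes "finite (K::'b set)" "infinite (UNIV::'a set)"
  shows "|K| \<le>o |UNIV::'a set|"
  by (rule ordLess_imp_ordLeq, rule finite_ordLess_infinite[OF card_of_Well_order card_of_Well_order])
     (simp_all add: Field_card_of assms)

lemma cardSuc_bound:
  fixes r :: "'a rel"
  assumes r1: "Card_order r" and r2: "Field r = UNIV" and r3: "infinite (UNIV::'a set)"
    and K: "K \<subseteq> Field (cardSuc r)" and cK: "|K| \<le>o |UNIV::'a set|"
  shows "\<exists>\<beta>. \<forall>b\<in>K. (b, \<beta>) \<in> cardSuc r \<and> b \<noteq> \<beta>"
proof -
  let ?W = "cardSuc r"
  have WC: "Card_order ?W" by (rule cardSuc_Card_order[OF r1])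
  have wo: "Well_order ?W" by (rule card_order_on_well_order_on[OF WC])
  have po: "partial_order_on (Field ?W) ?W" and tot: "total_on (Field ?W) ?W"
    using wo unfolding well_order_on_def linear_order_on_def by blast+
  have refl: "refl_on (Field ?W) ?W" and tr: "trans ?W" using partial_order_onD[OF po] by blast+
  have inf: "\<not> finite (Field r)" using r2 r3 by simp
  have reg: "regularCard ?W" by (rule infinite_cardSuc_regularCard[OF inf r1])
  have "|UNIV::'a set| =o r" using card_of_Field_ordIso[OF r1] r2 by simp
  then have "|K| \<le>o r" using cK ordLeq_ordIso_trans by blast
  then have "|K| <o ?W" using cardSuc_greater[OF r1] ordLeq_ordLess_trans by blast
  then have "\<not> |K| =o ?W" using not_ordLess_ordIso by blast
  then have "\<not> cofinal K ?W" using reg K unfolding regularCard_def by blast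
  then obtain a where a: "a \<in> Field ?W" and na: "\<forall>b\<in>K. \<not> (a \<noteq> b \<and> (a, b) \<in> ?W)"
    unfolding cofinal_def by blast
  have ba: "(b, a) \<in> ?W" if "b \<in> K" for b
  proof (cases "a = b")
    case True then show ?thesis using refl_onD[OF refl a] by simp
  next
    case False
    then show ?thesis using na that tot K a unfolding total_on_def by blast
  qed
  have "Field ?W \<noteq> under ?W a"
    using Card_order_infinite_not_under[OF WC] Cinfinite_cardSuc[of r] r1 inf
    unfolding cinfinite_def by blast
  moreover have "under ?W a \<subseteq> Field ?W" unfolding under_def by (auto intro: FieldI1)
  ultimately obtain c where c: "c \<in> Field ?W" "(c, a) \<notin> ?W" unfolding under_def by blast
  have "c \<noteq> a" using c refl_onD[OF refl a] by auto
  then have ac: "(a, c) \<in> ?W" using c a tot unfolding total_on_def by blast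
  show ?thesis
  proof (intro exI ballI conjI)
    fix b assume b: "b \<in> K"
    show "(b, c) \<in> ?W" using transD[OF tr ba[OF b] ac] .
    show "b \<noteq> c" using ba[OF b] c by auto
  qed
qed

context cod
begin

definition "coded W c A \<longleftrightarrow> (\<forall>y. \<exists>\<alpha>. Ev W c y (y \<in> A) \<alpha>)"
definition "cU = mkc a0 (\<lambda>i x. a0)"

lemma bas_chl: "bas c y = (\<forall>x. chl a0 c x = a1 \<longrightarrow> y x = chl a1 c x)"
  by (simp add: bas_def chl_def)

context
  fixes r :: "'a rel" and W :: "'b rel"
  assumes r1: "Card_order r" and r2: "Field r = UNIV" and r3: "infinite (UNIV::'a set)"
    and Wne: "Field W \<noteq> {}"
    and bnd: "\<And>K. K \<subseteq> Field W \<Longrightarrow> |K| \<le>o |UNIV::'a set| \<Longrightarrow> \<exists>\<beta>. \<forall>b\<in>K. (b, \<beta>) \<in> W \<and> b \<noteq> \<beta>"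
begin

lemma code_basic: "coded W (mkc a0 (\<lambda>i x. if i = a0 then (if x \<in> X then a1 else a0) else \<eta> x)) {\<zeta>. \<forall>x\<in>X. \<zeta> x = \<eta> x}"
  unfolding coded_def
proof
  fix y
  let ?c = "mkc a0 (\<lambda>i x. if i = a0 then (if x \<in> X then a1 else a0) else \<eta> x)"
  obtain \<alpha>0 where a0F: "\<alpha>0 \<in> Field W" using Wne by blast
  have "Ev W ?c y (bas ?c y) \<alpha>0" by (rule evB) (use a0F d01 d02 in \<open>simp_all add: mkc_t0\<close>)
  moreover have "bas ?c y = (y \<in> {\<zeta>. \<forall>x\<in>X. \<zeta> x = \<eta> x})"
    unfolding bas_chl chl_mkc using d01 by auto
  ultimately show "\<exists>\<alpha>. Ev W ?c y (y \<in> {\<zeta>. \<forall>x\<in>X. \<zeta> x = \<eta> x}) \<alpha>" by auto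
qed

lemma code_UNIV: "coded W cU UNIV"
  unfolding coded_def
proof
  fix y
  obtain \<alpha>0 where a0F: "\<alpha>0 \<in> Field W" using Wne by blast
  have "Ev W cU y (bas cU y) \<alpha>0" by (rule evB) (use a0F d01 d02 in \<open>simp_all add: mkc_t0 cU_def\<close>)
  moreover have "bas cU y = True"
    unfolding bas_chl cU_def chl_mkc using d01 by auto
  ultimately show "\<exists>\<alpha>. Ev W cU y (y \<in> UNIV) \<alpha>" by auto
qed

lemma succ_ex: "\<alpha> \<in> Field W \<Longrightarrow> \<exists>\<beta>. (\<alpha>, \<beta>) \<in> W \<and> \<alpha> \<noteq> \<beta>"
  using bnd[of "{\<alpha>}"] fin_le_UNIV[of "{\<alpha>}", OF _ r3] by auto

lemma code_compl: "coded W c A \<Longrightarrow> coded W (mkc a1 (\<lambda>i. c)) (- A)"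
  unfolding coded_def
proof
  fix y assume "\<forall>y. \<exists>\<alpha>. Ev W c y (y \<in> A) \<alpha>"
  then obtain \<alpha> where e: "Ev W c y (y \<in> A) \<alpha>" by blast
  obtain \<beta> where b: "(\<alpha>, \<beta>) \<in> W" "\<alpha> \<noteq> \<beta>" using succ_ex[OF Ev_Field[OF e]] by blast
  have "Ev W (mkc a1 (\<lambda>i. c)) y (\<not> (y \<in> A)) \<beta>"
    by (rule evC) (use e b in \<open>simp_all add: mkc_t0 chl_mkc\<close>)
  then show "\<exists>\<alpha>. Ev W (mkc a1 (\<lambda>i. c)) y (y \<in> - A) \<alpha>" by auto
qed

lemma code_empty: "\<exists>c. coded W c {}"
  using code_compl[OF code_UNIV] by auto

lemma code_union:
  assumes ne: "F \<noteq> {}" and cF: "|F| \<le>o |UNIV::'a set|" and cd: "\<forall>B\<in>F. \<exists>c. coded W c B"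
  shows "\<exists>c. coded W c (\<Union>F)"
proof -
  have "\<exists>g. g ` (UNIV::'a set) = F" using card_of_ordLeq2[OF ne, of "UNIV::'a set"] cF by simp
  then obtain g :: "'a \<Rightarrow> ('a \<Rightarrow> 'a) set" where g: "g ` UNIV = F" by blast
  have "\<forall>i. \<exists>c. coded W c (g i)"
  proof
    fix i
    have "g i \<in> F" using g by (metis rangeI)
    then show "\<exists>c. coded W c (g i)" using cd by blast
  qed
  then have "\<exists>cd. \<forall>i. coded W (cd i) (g i)" by (rule choice)
  then obtain cd where cdi: "\<And>i. coded W (cd i) (g i)" by blast
  have "\<exists>\<alpha>. Ev W (mkc a2 cd) y (y \<in> \<Union>F) \<alpha>" for y
  proof (cases "y \<in> \<Union>F")
    case True
    then obtain i where "y \<in> g i" using g by blast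
    moreover obtain \<alpha> where "Ev W (cd i) y (y \<in> g i) \<alpha>" using cdi[of i] unfolding coded_def by blast
    ultimately have e: "Ev W (cd i) y True \<alpha>" by simp
    obtain \<beta> where b: "(\<alpha>, \<beta>) \<in> W" "\<alpha> \<noteq> \<beta>" using succ_ex[OF Ev_Field[OF e]] by blast
    have "Ev W (mkc a2 cd) y True \<beta>"
      by (rule evUT[where i = i]) (use e b in \<open>simp_all add: mkc_t0 chl_mkc\<close>)
    then show ?thesis using True by auto
  next
    case False
    then have "\<forall>i. y \<notin> g i" using g by blast
    have "\<forall>i. \<exists>\<alpha>. Ev W (cd i) y False \<alpha>"
    proof
      fix i
      obtain \<alpha> where "Ev W (cd i) y (y \<in> g i) \<alpha>" using cdi[of i] unfolding coded_def by blast
      then show "\<exists>\<alpha>. Ev W (cd i) y False \<alpha>" using \<open>\<forall>i. y \<notin> g i\<close> by auto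
    qed
    then have "\<exists>af. \<forall>i. Ev W (cd i) y False (af i)" by (rule choice)
    then obtain af where af: "\<And>i. Ev W (cd i) y False (af i)" by blast
    have "range af \<subseteq> Field W" using Ev_Field[OF af] by blast
    moreover have "|range af| \<le>o |UNIV::'a set|" by (rule card_of_image)
    ultimately have "\<exists>\<beta>. \<forall>b\<in>range af. (b, \<beta>) \<in> W \<and> b \<noteq> \<beta>" by (rule bnd)
    then obtain \<beta> where b: "\<forall>b\<in>range af. (b, \<beta>) \<in> W \<and> b \<noteq> \<beta>" by blast
    have "Ev W (mkc a2 cd) y False \<beta>"
    proof (rule evUF)
      show "mkc a2 cd t0 = a2" by (simp add: mkc_t0)
      show "\<forall>i. \<exists>\<beta>'. (\<beta>', \<beta>) \<in> W \<and> \<beta>' \<noteq> \<beta> \<and> Ev W (chl i (mkc a2 cd)) y False \<beta>'"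
      proof
        fix i
        have "(af i, \<beta>) \<in> W \<and> af i \<noteq> \<beta>" using b by blast
        then show "\<exists>\<beta>'. (\<beta>', \<beta>) \<in> W \<and> \<beta>' \<noteq> \<beta> \<and> Ev W (chl i (mkc a2 cd)) y False \<beta>'"
          using af[of i] unfolding chl_mkc by blast
      qed
    qed
    then show ?thesis using False by auto
  qed
  then show ?thesis unfolding coded_def by blast
qed

lemma le_r_UNIV: "|F| \<le>o r \<Longrightarrow> |F| \<le>o |UNIV::'a set|"
  using ordLeq_ordIso_trans[OF _ ordIso_symmetric[OF card_of_Field_ordIso[OF r1]]] r2 by simp

lemma codes: "B \<in> kl_borel r r \<Longrightarrow> \<exists>c. coded W c B"
proof (induction rule: kl_borel.induct)
  case (basic A)
  show ?case
  proof (cases "A = {}")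
    case True then show ?thesis using code_empty by simp
  next
    case False
    then obtain X \<eta> where A: "A = {\<zeta>. \<forall>x\<in>X. \<zeta> x = \<eta> x}"
      using basic unfolding basic_open_def by blast
    show ?thesis unfolding A using code_basic by blast
  qed
next
  case (compl A)
  then show ?case using code_compl by blast
next
  case (union F)
  show ?case
  proof (cases "F = {}")
    case True then show ?thesis using code_empty by simp
  next
    case False
    show ?thesis by (rule code_union[OF False le_r_UNIV[OF union.hyps(2)]]) (use union.IH in blast)
  qed
next
  case (inter F)
  show ?case
  proof (cases "F = {}")
    case True then show ?thesis using code_UNIV by auto
  next
    case False
    have cc: "\<forall>B\<in>uminus ` F. \<exists>c. coded W c B" using inter.IH code_compl by blast
    have "|uminus ` F| \<le>o |UNIV::'a set|"
      by (rule ordLeq_transitive[OF card_of_image le_r_UNIV[OF inter.hyps(2)]])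
    then obtain c where "coded W c (\<Union>(uminus ` F))" using code_union[OF _ _ cc] False by blast
    then have "coded W (mkc a1 (\<lambda>i. c)) (- \<Union>(uminus ` F))" by (rule code_compl)
    moreover have "- \<Union>(uminus ` F) = \<Inter>F" by auto
    ultimately show ?thesis by auto
  qed
qed

end
end

theorem corollary3p19:
  fixes r :: "'a rel"
  assumes "Card_order r" and "Field r = UNIV" and "infinite (UNIV :: 'a set)"
    and "regularCard r"
  shows "\<exists>A. A \<in> kl_borel r (cardSuc r) \<and> A \<notin> kl_borel r r"
proof -
  note r1 = assms(1) and r2 = assms(2) and r3 = assms(3)
  have "|UNIV \<times> UNIV :: ('a \<times> 'a) set| \<le>o |UNIV :: 'a set|"
    by (rule ordIso_imp_ordLeq[OF card_of_Times_same_infinite[OF r3]])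
  then obtain J :: "'a \<times> 'a \<Rightarrow> 'a" where "inj_on J (UNIV \<times> UNIV)"
    unfolding card_of_ordLeq[symmetric] by blast
  then have injJ: "inj J" by simp
  obtain a0 :: 'a where True by blast
  obtain a1 :: 'a where a1: "a1 \<notin> {a0}" using ex_new_if_finite[OF r3, of "{a0}"] by auto
  obtain a2 :: 'a where a2: "a2 \<notin> {a0, a1}" using ex_new_if_finite[OF r3, of "{a0, a1}"] by auto
  interpret cod J a0 a1 a2 using injJ a1 a2 by unfold_locales auto
  let ?W = "cardSuc r"
  have inf: "\<not> finite (Field r)" using r2 r3 by simp
  have W1: "Card_order ?W" by (rule cardSuc_Card_order[OF r1])
  have W2: "infinite (Field ?W)" using Cinfinite_cardSuc[of r] r1 inf unfolding cinfinite_def by blast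
  have W3: "|UNIV::'a set| \<le>o ?W"
    using ordIso_ordLeq_trans[OF card_of_Field_ordIso[OF r1] cardSuc_ordLeq[OF r1]] r2 by simp
  have Wne: "Field ?W \<noteq> {}" using W2 by auto
  define D where "D = {y. \<exists>\<alpha>. Ev ?W y y False \<alpha>}"
  have DB: "D \<in> kl_borel r ?W" unfolding D_def by (rule diag_borel[OF r1 r2 r3 W1 W2 W3])
  have "D \<notin> kl_borel r r"
  proof
    assume "D \<in> kl_borel r r"
    then obtain c where "coded ?W c D"
      using codes[OF r1 r2 r3 Wne cardSuc_bound[OF r1 r2 r3]] by blast
    then obtain \<alpha> where e: "Ev ?W c c (c \<in> D) \<alpha>" unfolding coded_def by blast
    show False
    proof (cases "c \<in> D")
      case True
      then obtain \<alpha>' where "Ev ?W c c False \<alpha>'" unfolding D_def by blast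
      then show False using Ev_fun[OF e] True by simp
    next
      case False
      then have "Ev ?W c c False \<alpha>" using e by simp
      then have "c \<in> D" unfolding D_def by blast
      then show False using False by simp
    qed
  qed
  then show ?thesis using DB by blast
qed



end
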